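(* Let $S$ be a simple restricted $\mathfrak{D}$-module with central charge $c$ and level $\ell \neq 0$. Assume that $m_S=2n_S>0$. If $r_S=-\infty$, then $c=1$. Moreover, $S= K^{\mathfrak{D}}$ and $K$ is a simple $\mathfrak{h}$-module.
   Context: $\mathfrak{D}$ is the mirror Heisenberg-Virasoro algebra with basis $\{d_m, h_r, \mathbf{c}_1, \mathbf{c}_2 : m\in\mathbb{Z}, r\in\frac12+\mathbb{Z}\}$ and brackets $[d_m,d_n]=(m-n)d_{m+n}+\delta_{m+n,0}\frac{m^3-m}{12}\mathbf{c}_1$, $[d_m,h_r]=-rh_{m+r}$, $[h_r,h_s]=r\delta_{r+s,0}\mathbf{c}_2$, with $\mathbf{c}_1,\mathbf{c}_2$ central. $\mathfrak{h}=\bigoplus_{r\in\frac12+\mathbb{Z}}\mathbb{C}h_r\oplus\mathbb{C}\mathbf{c}_2$ is the twisted Heisenberg subalgebra. A module is restricted if every vector is annihilated by $d_i$ and $h_{i+\frac12}$ for all sufficiently large $i$; central charge $c$ / level $\ell$ means $\mathbf{c}_1$ / $\mathbf{c}_2$ acts as $c$ / $\ell$. For a simple restricted $\mathfrak{D}$-module $S$ of level $\ell\neq0$ define: $S(r)=\{v\in S: h_{r+i+\frac12}v=0\ \forall i\ge0\}$, $n_S=\min\{r\in\mathbb{Z}: S(r)\neq0\}$, $W_0=S(n_S)$; $U(r)=\{v\in W_0: d_{r+i}v=0\ \forall i\ge0\}$, $m_S=\min\{r\in\mathbb{Z}:U(r)\neq0\}$, $U_0=U(m_S)$. Define operators on $S$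 by $L_n=\frac{1}{2\ell}\sum_{k\in\mathbb{Z}+\frac12}h_{n-k}h_k$ for $n\neq0$, $L_0=\frac{1}{2\ell}\sum_{k\in\mathbb{Z}+\frac12}h_{-|k|}h_{|k|}+\frac1{16}$, and $d'_n=d_n-L_n$ ($n\in\mathbb{Z}$); these $d'_n$ commute with all $h_r$. Let $Y_n=\bigcap_{p\ge n}\{v\in U_0: d'_pv=0\}$, $r_S=\min\{n\in\mathbb{Z}: Y_n\neq0\}$, with $r_S=-\infty$ if $Y_n\neq0$ for all $n$; $K_0=Y_{r_S}$ (for $r_S=-\infty$ this means $K_0=\{v\in U_0: d'_pv=0\ \forall p\in\mathbb{Z}\}$), and $K=U(\mathfrak{h})K_0$. For an $\mathfrak{h}$-module $H$ on which $\mathbf{c}_2$ acts as $\ell\neq0$ (restricted), $H^{\mathfrak{D}}$ denotes the $\mathfrak{D}$-module structure on $H$ given by $d_n\mapsto L_n$, $h_r\mapsto h_r$, $\mathbf{c}_1\mapsto1$, $\mathbf{c}_2\mapsto\ell$. *)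

theory Defs
  imports Complex_Main "HOL-Library.Groups_Big_Fun"
begin

text \<open>
The operator d m represents d_m (m integer),
and h j represents h_(j + 1/2) (j integer), so h ranges over h_r, r in 1/2 + Z.
The central elements c_1, c_2 act by the scalars c and l; their action is
built into the bracket relations below.
\<close>

definition mirror_HV_module ::
  "(complex \<Rightarrow> 'v::ab_group_add \<Rightarrow> 'v) \<Rightarrow> (int \<Rightarrow> 'v \<Rightarrow> 'v) \<Rightarrow> (int \<Rightarrow> 'v \<Rightarrow> 'v)
     \<Rightarrow> complex \<Rightarrow> complex \<Rightarrow> bool" where
  "mirror_HV_module sc d h c l \<longleftrightarrow>
     vector_space sc \<and>
     (\<forall>m. Vector_Spaces.linear sc sc (d m)) \<and>
     (\<forall>j. Vector_Spaces.linear sc sc (h j)) \<and>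
     (\<forall>m n v. d m (d n v) - d n (d m v) =
        sc (of_int (m - n)) (d (m + n) v)
        + (if m + n = 0 then sc ((of_int m ^ 3 - of_int m) / 12 * c) v else 0)) \<and>
     (\<forall>m j v. d m (h j v) - h j (d m v) = sc (- (of_int j + 1/2)) (h (m + j) v)) \<and>
     (\<forall>i j v. h i (h j v) - h j (h i v) =
        (if i + j + 1 = 0 then sc ((of_int i + 1/2) * l) v else 0))"

definition restricted_module :: "(int \<Rightarrow> 'v::zero \<Rightarrow> 'v) \<Rightarrow> (int \<Rightarrow> 'v \<Rightarrow> 'v) \<Rightarrow> bool" where
  "restricted_module d h \<longleftrightarrow> (\<forall>v. \<exists>N. \<forall>i\<ge>N. d i v = 0 \<and> h i v = 0)"

definition invariant_under :: "('i \<Rightarrow> 'v \<Rightarrow> 'v) \<Rightarrow> 'v set \<Rightarrow> bool" where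
  "invariant_under f W \<longleftrightarrow> (\<forall>i. \<forall>w\<in>W. f i w \<in> W)"

definition simple_D_module ::
  "(complex \<Rightarrow> 'v::ab_group_add \<Rightarrow> 'v) \<Rightarrow> (int \<Rightarrow> 'v \<Rightarrow> 'v) \<Rightarrow> (int \<Rightarrow> 'v \<Rightarrow> 'v) \<Rightarrow> bool" where
  "simple_D_module sc d h \<longleftrightarrow> (UNIV::'v set) \<noteq> {0} \<and>
     (\<forall>W. module.subspace sc W \<and> invariant_under d W \<and> invariant_under h W
          \<longrightarrow> W = {0} \<or> W = UNIV)"

text \<open>Simple h-module structure on a subspace K (c_2 acts by the scalar l automatically).\<close>
definition simple_h_submodule ::
  "(complex \<Rightarrow> 'v::ab_group_add \<Rightarrow> 'v) \<Rightarrow> (int \<Rightarrow> 'v \<Rightarrow> 'v) \<Rightarrow> 'v set \<Rightarrow> bool" where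
  "simple_h_submodule sc h K \<longleftrightarrow> module.subspace sc K \<and> invariant_under h K \<and> K \<noteq> {0} \<and>
     (\<forall>W. module.subspace sc W \<and> W \<subseteq> K \<and> invariant_under h W \<longrightarrow> W = {0} \<or> W = K)"

definition S_sub :: "(int \<Rightarrow> 'v::zero \<Rightarrow> 'v) \<Rightarrow> int \<Rightarrow> 'v set" where
  "S_sub h r = {v. \<forall>i\<ge>0. h (r + i) v = 0}"

definition U_sub :: "(int \<Rightarrow> 'v::zero \<Rightarrow> 'v) \<Rightarrow> (int \<Rightarrow> 'v \<Rightarrow> 'v) \<Rightarrow> int \<Rightarrow> int \<Rightarrow> 'v set" where
  "U_sub d h nS r = {v \<in> S_sub h nS. \<forall>i\<ge>0. d (r + i) v = 0}"

text \<open>Sugawara-type operators L_n (the sums are finite on a restricted module).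
  With k = j + 1/2: h_(n-k) = h (n - j - 1); for L_0 the term h_(-|k|) h_(|k|) is
  h (-j-1) (h j v) if j >= 0 and h j (h (-j-1) v) if j < 0.\<close>
definition L_op :: "(complex \<Rightarrow> 'v::ab_group_add \<Rightarrow> 'v) \<Rightarrow> (int \<Rightarrow> 'v \<Rightarrow> 'v) \<Rightarrow> complex \<Rightarrow> int \<Rightarrow> 'v \<Rightarrow> 'v" where
  "L_op sc h l n v =
     (if n \<noteq> 0 then sc (1 / (2 * l)) (Sum_any (\<lambda>j. h (n - j - 1) (h j v)))
      else sc (1 / (2 * l)) (Sum_any (\<lambda>j. if j \<ge> 0 then h (- j - 1) (h j v) else h j (h (- j - 1) v)))
           + sc (1/16) v)"

definition d_prime :: "(complex \<Rightarrow> 'v::ab_group_add \<Rightarrow> 'v) \<Rightarrow> (int \<Rightarrow> 'v \<Rightarrow> 'v) \<Rightarrow> (int \<Rightarrow> 'v \<Rightarrow> 'v)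
    \<Rightarrow> complex \<Rightarrow> int \<Rightarrow> 'v \<Rightarrow> 'v" where
  "d_prime sc d h l n v = d n v - L_op sc h l n v"

definition Y_sub :: "(complex \<Rightarrow> 'v::ab_group_add \<Rightarrow> 'v) \<Rightarrow> (int \<Rightarrow> 'v \<Rightarrow> 'v) \<Rightarrow> (int \<Rightarrow> 'v \<Rightarrow> 'v)
    \<Rightarrow> complex \<Rightarrow> 'v set \<Rightarrow> int \<Rightarrow> 'v set" where
  "Y_sub sc d h l U0 n = {v \<in> U0. \<forall>p\<ge>n. d_prime sc d h l p v = 0}"

definition h_generated :: "(complex \<Rightarrow> 'v::ab_group_add \<Rightarrow> 'v) \<Rightarrow> (int \<Rightarrow> 'v \<Rightarrow> 'v) \<Rightarrow> 'v set \<Rightarrow> 'v set" where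
  "h_generated sc h K0 = \<Inter> {W. module.subspace sc W \<and> K0 \<subseteq> W \<and> invariant_under h W}"

end

theory Submission
  imports Defs
begin

abbreviation fsupp :: "(int \<Rightarrow> 'v::ab_group_add) \<Rightarrow> bool" where
  "fsupp g \<equiv> finite {j. g j \<noteq> 0}"

lemma additive_Sum_any:
  fixes f :: "'a::ab_group_add \<Rightarrow> 'b::ab_group_add"
  assumes add: "\<And>x y. f (x + y) = f x + f y" and fin: "finite {j. g j \<noteq> 0}"
  shows "f (Sum_any g) = Sum_any (\<lambda>j. f (g j))"
proof -
  have f0: "f 0 = 0" using add[of 0 0] by simp
  have s: "f (sum g A) = sum (\<lambda>j. f (g j)) A" for A
    by (induct A rule: infinite_finite_induct) (simp_all add: f0 add)
  have "Sum_any g = sum g {j. g j \<noteq> 0}" by (rule Sum_any.expand_superset[OF fin]) simp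
  moreover have "Sum_any (\<lambda>j. f (g j)) = sum (\<lambda>j. f (g j)) {j. g j \<noteq> 0}"
    by (rule Sum_any.expand_superset[OF fin]) (auto simp: f0)
  ultimately show ?thesis using s by simp
qed

lemma fsupp_bound: "{j. g j \<noteq> 0} \<subseteq> {a..b::int} \<Longrightarrow> fsupp g"
  using finite_subset by blast

lemma fsupp_add: "fsupp f \<Longrightarrow> fsupp g \<Longrightarrow> fsupp (\<lambda>j. f j + g j)"
  by (rule finite_subset[of _ "{j. f j \<noteq> 0} \<union> {j. g j \<noteq> 0}"]) auto

lemma fsupp_comp: "f 0 = 0 \<Longrightarrow> fsupp g \<Longrightarrow> fsupp (\<lambda>j. f (g j))"
  by (rule finite_subset[of _ "{j. g j \<noteq> 0}"]) auto

lemma fsupp_shift: "fsupp g \<Longrightarrow> fsupp (\<lambda>j. g (j + a))"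
proof -
  assume "fsupp g"
  then have "finite ((\<lambda>k. k - a) ` {j. g j \<noteq> 0})" by simp
  then show ?thesis by (rule finite_subset[rotated]) force
qed

lemma fsupp_delta: "fsupp (\<lambda>j. if j = a then x else 0)"
  by (rule finite_subset[of _ "{a}"]) auto

lemma Sum_any_shift: "Sum_any (\<lambda>j. g (j + a)) = Sum_any (g :: int \<Rightarrow> 'v::comm_monoid_add)"
proof -
  have b: "bij (\<lambda>j::int. j + a)"
    by (rule bijI) (auto simp: inj_def surj_def intro!: exI[of _ "_ - a"])
  show ?thesis by (rule Sum_any.reindex_cong[OF b, symmetric]) (simp add: o_def)
qed

lemma Sum_any_add: "fsupp f \<Longrightarrow> fsupp g \<Longrightarrow> Sum_any (\<lambda>j. f j + g j) = Sum_any f + Sum_any g"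
  by (rule Sum_any.distrib)

locale MHV =
  fixes sc :: "complex \<Rightarrow> 'v::ab_group_add \<Rightarrow> 'v" and d h :: "int \<Rightarrow> 'v \<Rightarrow> 'v" and c l :: complex
  assumes mod: "mirror_HV_module sc d h c l" and restr: "restricted_module d h" and lnz: "l \<noteq> 0"
begin

sublocale vs: vector_space sc using mod by (simp add: mirror_HV_module_def)

lemma hlin: "Vector_Spaces.linear sc sc (h j)" using mod by (simp add: mirror_HV_module_def)
lemma dlin: "Vector_Spaces.linear sc sc (d j)" using mod by (simp add: mirror_HV_module_def)

lemma h_add: "h j (x + y) = h j x + h j y"
  using hlin[of j] by (simp add: linear_iff_module_hom module_hom.add)
lemma h_sc: "h j (sc a x) = sc a (h j x)"
  using hlin[of j] by (simp add: linear_iff_module_hom module_hom.scale)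
lemma h_zero[simp]: "h j 0 = 0"
  using hlin[of j] by (simp add: linear_iff_module_hom module_hom.zero)
lemma h_diff: "h j (x - y) = h j x - h j y"
  using hlin[of j] by (simp add: linear_iff_module_hom module_hom.diff)
lemma d_add: "d j (x + y) = d j x + d j y"
  using dlin[of j] by (simp add: linear_iff_module_hom module_hom.add)
lemma d_sc: "d j (sc a x) = sc a (d j x)"
  using dlin[of j] by (simp add: linear_iff_module_hom module_hom.scale)
lemma d_zero[simp]: "d j 0 = 0"
  using dlin[of j] by (simp add: linear_iff_module_hom module_hom.zero)
lemma d_diff: "d j (x - y) = d j x - d j y"
  using dlin[of j] by (simp add: linear_iff_module_hom module_hom.diff)

lemma hcomm: "h i (h j v) = h j (h i v) + (if i + j + 1 = 0 then sc ((of_int i + 1/2) * l) v else 0)"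
proof -
  have e: "h i (h j v) - h j (h i v) = (if i + j + 1 = 0 then sc ((of_int i + 1/2) * l) v else 0)"
    using mod unfolding mirror_HV_module_def by blast
  show ?thesis unfolding e[symmetric] by simp
qed

lemma dh: "d m (h j v) = h j (d m v) + sc (- (of_int j + 1/2)) (h (m + j) v)"
proof -
  have e: "d m (h j v) - h j (d m v) = sc (- (of_int j + 1/2)) (h (m + j) v)"
    using mod unfolding mirror_HV_module_def by blast
  show ?thesis unfolding e[symmetric] by simp
qed

lemma vir: "d m (d n v) = d n (d m v) + (sc (of_int (m - n)) (d (m + n) v)
        + (if m + n = 0 then sc ((of_int m ^ 3 - of_int m) / 12 * c) v else 0))"
proof -
  have e: "d m (d n v) - d n (d m v) = (sc (of_int (m - n)) (d (m + n) v)
        + (if m + n = 0 then sc ((of_int m ^ 3 - of_int m) / 12 * c) v else 0))"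
    using mod unfolding mirror_HV_module_def by blast
  show ?thesis unfolding e[symmetric] by simp
qed

lemma hbound: "\<exists>N. \<forall>i\<ge>N. h i v = 0"
  using restr unfolding restricted_module_def by blast


definition P :: "int \<Rightarrow> 'v \<Rightarrow> int \<Rightarrow> 'v" where
  "P n v j = h (n - j - 1) (h j v)"

definition T :: "int \<Rightarrow> 'v \<Rightarrow> int \<Rightarrow> 'v" where
  "T n v j = (if n \<noteq> 0 then h (n - j - 1) (h j v)
     else if j \<ge> 0 then h (- j - 1) (h j v) else h j (h (- j - 1) v))"

abbreviation L where "L \<equiv> L_op sc h l"
abbreviation D' where "D' \<equiv> d_prime sc d h l"

lemma L_T: "L n v = sc (1 / (2 * l)) (Sum_any (T n v)) + (if n = 0 then sc (1/16) v else 0)"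
  by (simp add: L_op_def T_def)

lemma L_P: "n \<noteq> 0 \<Longrightarrow> L n v = sc (1 / (2 * l)) (Sum_any (P n v))"
  by (simp add: L_op_def P_def)

lemma T_P: "T n v j = P n v j + (if n = 0 \<and> j < 0 then sc ((of_int j + 1/2) * l) v else 0)"
proof (cases "n = 0 \<and> j < 0")
  case True
  have "h j (h (- j - 1) v) = h (- j - 1) (h j v) + sc ((of_int j + 1/2) * l) v"
    using hcomm[of j "- j - 1" v] by simp
  then show ?thesis using True by (simp add: T_def P_def)
qed (auto simp: T_def P_def)

lemma T_nz: "n \<noteq> 0 \<Longrightarrow> T n v = P n v"
  by (rule ext) (simp add: T_P)

lemma fsupp_T: "fsupp (T n v)"
proof -
  obtain N where N: "\<forall>i\<ge>N. h i v = 0" using hbound by blast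
  define M where "M = max N 0"
  have M: "\<forall>i\<ge>M. h i v = 0" "M \<ge> 0" using N by (auto simp: M_def)
  have "{j. T n v j \<noteq> 0} \<subseteq> {- \<bar>n\<bar> - M .. M}"
  proof
    fix j assume "j \<in> {j. T n v j \<noteq> 0}"
    then have nz: "T n v j \<noteq> 0" by simp
    show "j \<in> {- \<bar>n\<bar> - M .. M}"
    proof (cases "n = 0")
      case True
      show ?thesis
      proof (cases "j \<ge> 0")
        case j: True
        have "j < M"
        proof (rule ccontr)
          assume "\<not> j < M" then have "h j v = 0" using M by simp
          then show False using nz True j by (simp add: T_def)
        qed
        then show ?thesis using j M by auto
      next
        case j: False
        have "- j - 1 < M"
        proof (rule ccontr)
          assume "\<not> - j - 1 < M" then have "h (- j - 1) v = 0" using M by simp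
          then show False using nz True j by (simp add: T_def)
        qed
        then show ?thesis using j M by auto
      qed
    next
      case False
      have "j < M"
      proof (rule ccontr)
        assume "\<not> j < M" then have "h j v = 0" using M by simp
        then show False using nz False by (simp add: T_def)
      qed
      moreover have "n - j - 1 < M"
      proof (rule ccontr)
        assume "\<not> n - j - 1 < M" then have "h (n - j - 1) v = 0" using M by simp
        moreover have "h (n - j - 1) (h j v) = h j (h (n - j - 1) v)"
          using hcomm[of "n - j - 1" j v] False by simp
        ultimately show False using nz False by (simp add: T_def)
      qed
      ultimately show ?thesis by auto
    qed
  qed
  then show ?thesis by (rule fsupp_bound)
qed

lemma fsupp_P: "n \<noteq> 0 \<Longrightarrow> fsupp (P n v)"
  using fsupp_T[of n v] by (simp add: T_nz)


lemma P_h: "P n (h i v) j = h i (P n v j)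
   + (if j = - i - 1 then sc (- (of_int i + 1/2) * l) (h (n + i) v) else 0)
   + (if j = n + i then sc (- (of_int i + 1/2) * l) (h (n + i) v) else 0)"
proof -
  have a: "P n (h i v) j = h (n-j-1) (h i (h j v)) + h (n-j-1) (if j + i + 1 = 0 then sc ((of_int j + 1/2) * l) v else 0)"
    unfolding P_def by (subst hcomm[of j i v]) (simp add: h_add)
  have b: "h (n-j-1) (h i (h j v)) = h i (P n v j) + (if n-j-1 + i + 1 = 0 then sc ((of_int (n-j-1) + 1/2) * l) (h j v) else 0)"
    unfolding P_def by (rule hcomm)
  have c1: "h (n-j-1) (if j + i + 1 = 0 then sc ((of_int j + 1/2) * l) v else 0)
     = (if j = - i - 1 then sc (- (of_int i + 1/2) * l) (h (n + i) v) else 0)"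
  proof (cases "j = - i - 1")
    case True
    then have jj: "complex_of_int j = - of_int i - 1" by simp
    have "n - j - 1 = n + i" using True by simp
    moreover have "(of_int j + 1/2) * l = - (of_int i + 1/2) * l" unfolding jj by (simp add: algebra_simps)
    ultimately show ?thesis using True by (simp add: h_sc)
  qed auto
  have c2: "(if n-j-1 + i + 1 = 0 then sc ((of_int (n-j-1) + 1/2) * l) (h j v) else 0)
     = (if j = n + i then sc (- (of_int i + 1/2) * l) (h (n + i) v) else 0)"
  proof (cases "j = n + i")
    case True
    then have jj: "complex_of_int j = of_int n + of_int i" by simp
    have "(of_int (n-j-1) + 1/2) * l = - (of_int i + 1/2) * l" unfolding of_int_diff jj by (simp add: algebra_simps)
    then show ?thesis using True by simp
  qed auto
  show ?thesis using a b c1 c2 by (simp add: ac_simps)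
qed

lemma T_h: "T n (h i v) j = h i (T n v j)
   + (if j = - i - 1 then sc (- (of_int i + 1/2) * l) (h (n + i) v) else 0)
   + (if j = n + i then sc (- (of_int i + 1/2) * l) (h (n + i) v) else 0)"
  by (simp add: T_P P_h h_add h_sc ac_simps)

lemma Sum_any_h: "fsupp g \<Longrightarrow> h i (Sum_any g) = Sum_any (\<lambda>j. h i (g j))"
  by (rule additive_Sum_any) (simp_all add: h_add)

lemma Sum_any_sc: "fsupp g \<Longrightarrow> sc a (Sum_any g) = Sum_any (\<lambda>j. sc a (g j))"
  by (rule additive_Sum_any) (simp_all add: vs.scale_right_distrib)

lemma L_h: "L n (h i v) = h i (L n v) + sc (- (of_int i + 1/2)) (h (n + i) v)"
proof -
  define x where "x = sc (- (of_int i + 1/2) * l) (h (n + i) v)"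
  have f1: "fsupp (\<lambda>j. h i (T n v j))" by (rule fsupp_comp[of "h i", OF h_zero fsupp_T])
  have "T n (h i v) = (\<lambda>j. (h i (T n v j) + (if j = - i - 1 then x else 0)) + (if j = n + i then x else 0))"
    by (rule ext) (simp only: T_h x_def)
  then have "Sum_any (T n (h i v)) = Sum_any (\<lambda>j. (h i (T n v j) + (if j = - i - 1 then x else 0)) + (if j = n + i then x else 0))"
    by simp
  also have "\<dots> = Sum_any (\<lambda>j. h i (T n v j) + (if j = - i - 1 then x else 0)) + Sum_any (\<lambda>j. if j = n + i then x else 0)"
    by (rule Sum_any_add[OF fsupp_add[OF f1 fsupp_delta] fsupp_delta])
  also have "\<dots> = Sum_any (\<lambda>j. h i (T n v j)) + Sum_any (\<lambda>j. if j = - i - 1 then x else 0) + Sum_any (\<lambda>j. if j = n + i then x else 0)"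
    by (simp only: Sum_any_add[OF f1 fsupp_delta])
  also have "\<dots> = h i (Sum_any (T n v)) + x + x"
    by (simp add: Sum_any_h[OF fsupp_T])
  finally have S: "Sum_any (T n (h i v)) = h i (Sum_any (T n v)) + x + x" .
  have xx: "sc (1 / (2 * l)) (x + x) = sc (- (of_int i + 1/2)) (h (n + i) v)"
  proof -
    have "sc (1 / (2 * l)) x = sc (- (of_int i + 1/2) / 2) (h (n + i) v)"
      unfolding x_def using lnz by (simp add: field_simps)
    then have "sc (1 / (2 * l)) (x + x) = sc (- (of_int i + 1/2) / 2) (h (n + i) v) + sc (- (of_int i + 1/2) / 2) (h (n + i) v)"
      by (simp only: vs.scale_right_distrib)
    also have "\<dots> = sc (- (of_int i + 1/2) / 2 + - (of_int i + 1/2) / 2) (h (n + i) v)"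
      by (rule vs.scale_left_distrib[symmetric])
    also have "- (of_int i + 1/2) / 2 + - (of_int i + 1/2) / 2 = - (of_int i + (1/2::complex))"
      by (simp add: field_simps)
    finally show ?thesis .
  qed
  show ?thesis
    unfolding L_T[of n "h i v"] L_T[of n v] S
    using xx by (simp add: h_add h_sc vs.scale_right_distrib ac_simps)
qed

lemma T_add: "T n (x + y) j = T n x j + T n y j"
  by (simp add: T_def h_add)
lemma T_sc: "T n (sc a x) j = sc a (T n x j)"
  by (simp add: T_def h_sc)

lemma L_add: "L n (x + y) = L n x + L n y"
proof -
  have "Sum_any (T n (x + y)) = Sum_any (T n x) + Sum_any (T n y)"
  proof -
    have "T n (x + y) = (\<lambda>j. T n x j + T n y j)" by (rule ext) (simp add: T_add)
    then show ?thesis by (simp only: Sum_any_add[OF fsupp_T fsupp_T])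
  qed
  then show ?thesis unfolding L_T[of n] by (simp add: vs.scale_right_distrib ac_simps)
qed

lemma L_sc: "L n (sc a x) = sc a (L n x)"
proof -
  have "Sum_any (T n (sc a x)) = sc a (Sum_any (T n x))"
  proof -
    have "T n (sc a x) = (\<lambda>j. sc a (T n x j))" by (rule ext) (simp add: T_sc)
    then show ?thesis by (simp only: Sum_any_sc[OF fsupp_T])
  qed
  then show ?thesis unfolding L_T[of n] by (simp add: vs.scale_right_distrib vs.scale_left_commute)
qed

lemma L_zero[simp]: "L n 0 = 0"
  using L_add[of n 0 0] by simp

lemma Sum_any_L: "fsupp g \<Longrightarrow> L n (Sum_any g) = Sum_any (\<lambda>j. L n (g j))"
  by (rule additive_Sum_any) (simp_all add: L_add)

lemma D'_def2: "D' n v = d n v - L n v"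
  by (simp add: d_prime_def)

lemma D'_add: "D' n (x + y) = D' n x + D' n y"
  by (simp add: D'_def2 d_add L_add)
lemma D'_sc: "D' n (sc a x) = sc a (D' n x)"
  by (simp add: D'_def2 d_sc L_sc vs.scale_right_diff_distrib)
lemma D'_zero[simp]: "D' n 0 = 0"
  by (simp add: D'_def2)

lemma D'_h: "D' n (h i v) = h i (D' n v)"
  by (simp add: D'_def2 dh L_h h_diff)

lemma D'_T: "D' p (T n v j) = T n (D' p v) j"
  by (simp add: T_def D'_h)

lemma D'_L: "D' p (L n v) = L n (D' p v)"
proof -
  have "D' p (Sum_any (T n v)) = Sum_any (T n (D' p v))"
    by (subst additive_Sum_any[OF D'_add fsupp_T]) (simp add: D'_T)
  then show ?thesis unfolding L_T[of n] by (simp add: D'_add D'_sc)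
qed


lemma fsupp_sc: "fsupp g \<Longrightarrow> fsupp (\<lambda>j. sc (s j) (g j))"
  by (rule finite_subset[of _ "{j. g j \<noteq> 0}"]) auto

lemma LP_point: "L a (P b v j) = P b (L a v) j + sc (- (of_int j + 1/2)) (P (a + b) v (j + a))
   + sc (- (of_int b - of_int j - 1/2)) (P (a + b) v j)"
proof -
  have 1: "L a (P b v j) = h (b-j-1) (L a (h j v)) + sc (- (of_int (b-j-1) + 1/2)) (h (a + (b-j-1)) (h j v))"
    unfolding P_def by (rule L_h)
  have i1: "a + b - (j + a) - 1 = b - j - 1" "j + a = a + j" by simp_all
  have 2: "h (b-j-1) (L a (h j v)) = P b (L a v) j + sc (- (of_int j + 1/2)) (P (a + b) v (j + a))"
    unfolding P_def L_h i1 by (simp add: h_add h_sc)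
  have 3: "a + (b-j-1) = a + b - j - 1" "- (of_int (b-j-1) + 1/2) = - (of_int b - of_int j - (1/2::complex))"
    by (simp_all add: algebra_simps)
  show ?thesis unfolding 1 2 3 by (simp add: P_def)
qed

lemma LL: assumes a: "a \<noteq> 0" and b: "b \<noteq> 0" and ab: "a + b \<noteq> 0"
  shows "L a (L b v) = L b (L a v) + sc (of_int (a - b)) (L (a + b) v)"
proof -
  define A where "A = P b (L a v)"
  define g where "g = (\<lambda>k. sc (- (of_int k - of_int a + 1/2)) (P (a + b) v k))"
  define C where "C = (\<lambda>j. sc (- (of_int b - of_int j - 1/2)) (P (a + b) v j))"
  have fA: "fsupp A" unfolding A_def by (rule fsupp_P[OF b])
  have fg: "fsupp g" unfolding g_def by (rule fsupp_sc[OF fsupp_P[OF ab]])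
  have fB: "fsupp (\<lambda>j. g (j + a))" by (rule fsupp_shift[OF fg])
  have fC: "fsupp C" unfolding C_def by (rule fsupp_sc[OF fsupp_P[OF ab]])
  have pt: "(\<lambda>j. L a (P b v j)) = (\<lambda>j. (A j + g (j + a)) + C j)"
    by (rule ext) (simp add: LP_point A_def g_def C_def)
  have gC: "(\<lambda>k. g k + C k) = (\<lambda>k. sc (of_int (a - b)) (P (a + b) v k))"
  proof (rule ext)
    fix k
    have "g k + C k = sc (- (of_int k - of_int a + 1/2) + - (of_int b - of_int k - 1/2)) (P (a + b) v k)"
      unfolding g_def C_def by (rule vs.scale_left_distrib[symmetric])
    also have "- (of_int k - of_int a + 1/2) + - (of_int b - of_int k - 1/2) = (of_int (a - b) :: complex)"
      by simp
    finally show "g k + C k = sc (of_int (a - b)) (P (a + b) v k)" .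
  qed
  have "L a (Sum_any (P b v)) = Sum_any (\<lambda>j. L a (P b v j))"
    by (rule Sum_any_L[OF fsupp_P[OF b]])
  also have "\<dots> = Sum_any A + Sum_any (\<lambda>j. g (j + a)) + Sum_any C"
    unfolding pt by (simp only: Sum_any_add fA fB fC fsupp_add)
  also have "Sum_any (\<lambda>j. g (j + a)) = Sum_any g" by (rule Sum_any_shift)
  also have "Sum_any A + Sum_any g + Sum_any C = Sum_any A + (Sum_any g + Sum_any C)" by (simp add: ac_simps)
  also have "Sum_any g + Sum_any C = Sum_any (\<lambda>k. g k + C k)" by (rule Sum_any_add[OF fg fC, symmetric])
  also have "\<dots> = sc (of_int (a - b)) (Sum_any (P (a + b) v))"
    unfolding gC by (rule Sum_any_sc[OF fsupp_P[OF ab], symmetric])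
  finally have S: "L a (Sum_any (P b v)) = Sum_any A + sc (of_int (a - b)) (Sum_any (P (a + b) v))" .
  show ?thesis
    unfolding L_P[OF b, of v] L_sc S L_P[OF b, of "L a v"] L_P[OF ab]
    by (simp add: A_def vs.scale_right_distrib vs.scale_left_commute[of "1 / (2 * l)"])
qed


lemma sc_comb: "- sc p (sc a v) - sc q (sc b v) = sc (- (p * a) - q * b) v"
  by (simp add: vs.scale_left_diff_distrib)

lemma E_scalar: "- sc (- (of_int j + 1/2)) (if j + 2 < 0 then sc ((of_int (j + 2) + 1/2) * l) v else 0)
   - sc (- (of_int (-2) - of_int j - 1/2)) (if j < 0 then sc ((of_int j + 1/2) * l) v else 0)
   = (if j = -2 \<or> j = -1 then sc (3/4 * l) v else 0)"
proof -
  consider "j < -2" | "j = -2" | "j = -1" | "j \<ge> 0" by linarith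
  then show ?thesis
  proof cases
    case 1
    then have "- sc (- (of_int j + 1/2)) (if j + 2 < 0 then sc ((of_int (j + 2) + 1/2) * l) v else 0)
      - sc (- (of_int (-2) - of_int j - 1/2)) (if j < 0 then sc ((of_int j + 1/2) * l) v else 0)
      = sc (- ((- (of_int j + 1/2)) * ((of_int (j + 2) + 1/2) * l)) - (- (of_int (-2) - of_int j - 1/2)) * ((of_int j + 1/2) * l)) v"
    proof -
      have "j + 2 < 0" "j < 0" using 1 by auto
      then show ?thesis by (simp only: sc_comb if_True)
    qed
    also have "- ((- (of_int j + 1/2)) * ((of_int (j + 2) + 1/2) * l)) - (- (of_int (-2) - of_int j - 1/2)) * ((of_int j + 1/2) * l) = (0::complex)"
      by (simp add: field_simps)
    finally show ?thesis using 1 by simp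
  next
    case 2
    then show ?thesis by simp
  next
    case 3
    then show ?thesis by simp
  next
    case 4
    then show ?thesis by simp
  qed
qed


lemma E_point: "L 2 (P (-2) v j) = P (-2) (L 2 v) j + sc (- (of_int j + 1/2)) (T 0 v (j + 2))
   + sc (- (of_int (-2) - of_int j - 1/2)) (T 0 v j) + (if j = -2 \<or> j = -1 then sc (3/4 * l) v else 0)"
proof -
  have P0: "P 0 v k = T 0 v k - (if k < 0 then sc ((of_int k + 1/2) * l) v else 0)" for k
    by (simp add: T_P)
  have z: "(2::int) + -2 = 0" by simp
  have "L 2 (P (-2) v j) = P (-2) (L 2 v) j + sc (- (of_int j + 1/2)) (P 0 v (j + 2))
      + sc (- (of_int (-2) - of_int j - 1/2)) (P 0 v j)"
    using LP_point[of 2 "-2" v j] unfolding z .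
  also have "\<dots> = P (-2) (L 2 v) j + sc (- (of_int j + 1/2)) (T 0 v (j + 2))
   + sc (- (of_int (-2) - of_int j - 1/2)) (T 0 v j)
   + (- sc (- (of_int j + 1/2)) (if j + 2 < 0 then sc ((of_int (j + 2) + 1/2) * l) v else 0)
   - sc (- (of_int (-2) - of_int j - 1/2)) (if j < 0 then sc ((of_int j + 1/2) * l) v else 0))"
    unfolding P0 vs.scale_right_diff_distrib by (simp only: diff_conv_add_uminus ac_simps)
  finally show ?thesis unfolding E_scalar .
qed

lemma LE: "L 2 (L (-2) v) = L (-2) (L 2 v) + sc 4 (L 0 v) + sc (1/2) v"
proof -
  define x where "x = sc (3/4 * l) v"
  define A where "A = P (-2) (L 2 v)"
  define g where "g = (\<lambda>k. sc (- (of_int k - 2 + 1/2)) (T 0 v k))"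
  define C where "C = (\<lambda>j. sc (- (of_int (-2) - of_int j - 1/2)) (T 0 v j))"
  define R where "R = (\<lambda>j::int. if j = -2 \<or> j = -1 then x else 0)"
  have m2: "(-2::int) \<noteq> 0" by simp
  have fA: "fsupp A" unfolding A_def by (rule fsupp_P[OF m2])
  have fg: "fsupp g" unfolding g_def by (rule fsupp_sc[OF fsupp_T])
  have fB: "fsupp (\<lambda>j. g (j + 2))" by (rule fsupp_shift[OF fg])
  have fC: "fsupp C" unfolding C_def by (rule fsupp_sc[OF fsupp_T])
  have fR: "fsupp R" by (rule fsupp_bound[of _ "-2" "-1"]) (auto simp: R_def)
  have SR: "Sum_any R = x + x"
  proof -
    have "Sum_any R = sum R {-2, -1}" by (rule Sum_any.expand_superset) (auto simp: R_def)
    then show ?thesis by (simp add: R_def)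
  qed
  have pt: "(\<lambda>j. L 2 (P (-2) v j)) = (\<lambda>j. ((A j + g (j + 2)) + C j) + R j)"
    by (rule ext) (simp add: E_point A_def g_def C_def R_def x_def)
  have gC: "(\<lambda>k. g k + C k) = (\<lambda>k. sc 4 (T 0 v k))"
  proof (rule ext)
    fix k
    have "g k + C k = sc (- (of_int k - 2 + 1/2) + - (of_int (-2) - of_int k - 1/2)) (T 0 v k)"
      unfolding g_def C_def by (rule vs.scale_left_distrib[symmetric])
    also have "- (of_int k - 2 + 1/2) + - (of_int (-2) - of_int k - 1/2) = (4 :: complex)"
      by simp
    finally show "g k + C k = sc 4 (T 0 v k)" .
  qed
  have "L 2 (Sum_any (P (-2) v)) = Sum_any (\<lambda>j. L 2 (P (-2) v j))"
    by (rule Sum_any_L[OF fsupp_P[OF m2]])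
  also have "\<dots> = Sum_any A + Sum_any (\<lambda>j. g (j + 2)) + Sum_any C + Sum_any R"
    unfolding pt by (simp only: Sum_any_add fA fB fC fR fsupp_add)
  also have "Sum_any (\<lambda>j. g (j + 2)) = Sum_any g" by (rule Sum_any_shift)
  also have "Sum_any A + Sum_any g + Sum_any C + Sum_any R = Sum_any A + (Sum_any g + Sum_any C) + Sum_any R" by (simp add: ac_simps)
  also have "Sum_any g + Sum_any C = Sum_any (\<lambda>k. g k + C k)" by (rule Sum_any_add[OF fg fC, symmetric])
  also have "\<dots> = sc 4 (Sum_any (T 0 v))"
    unfolding gC by (rule Sum_any_sc[OF fsupp_T, symmetric])
  finally have S: "L 2 (Sum_any (P (-2) v)) = Sum_any A + sc 4 (Sum_any (T 0 v)) + (x + x)"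
    unfolding SR .
  have xx: "sc (1 / (2 * l)) (x + x) = sc 4 (sc (1/16) v) + sc (1/2) v"
  proof -
    have "sc (1 / (2 * l)) (x + x) = sc (1 / (2 * l) * (3/4 * l)) v + sc (1 / (2 * l) * (3/4 * l)) v"
      unfolding x_def by (simp add: vs.scale_right_distrib)
    also have "\<dots> = sc (1 / (2 * l) * (3/4 * l) + 1 / (2 * l) * (3/4 * l)) v"
      by (rule vs.scale_left_distrib[symmetric])
    also have "1 / (2 * l) * (3/4 * l) + 1 / (2 * l) * (3/4 * l) = 4 * (1/16) + (1/2 :: complex)"
      using lnz by (simp add: field_simps)
    also have "sc (4 * (1/16) + 1/2) v = sc 4 (sc (1/16) v) + sc (1/2) v"
      by (simp only: vs.scale_left_distrib vs.scale_scale)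
    finally show ?thesis .
  qed
  have L0: "L 0 v = sc (1 / (2 * l)) (Sum_any (T 0 v)) + sc (1/16) v"
    using L_T[of 0 v] by simp
  show ?thesis
    unfolding L_P[OF m2, of v] L_sc S L_P[OF m2, of "L 2 v"] L0 A_def[symmetric]
    using xx
    by (simp add: vs.scale_right_distrib vs.scale_left_commute[of "1 / (2 * l)"] ac_simps)
qed


lemma add_diff_hom: "(\<And>x y. f (x + y) = f x + f y) \<Longrightarrow> f (x - y) = f x - f y"
  for f :: "'a::ab_group_add \<Rightarrow> 'b::ab_group_add"
proof -
  assume H: "\<And>x y. f (x + y) = f x + f y"
  have "f (x - y) + f y = f x" using H[of "x - y" y] by simp
  then show ?thesis by (simp add: eq_diff_eq)
qed

lemma L_diff: "L n (x - y) = L n x - L n y"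
  by (rule add_diff_hom) (rule L_add)
lemma D'_diff: "D' n (x - y) = D' n x - D' n y"
  by (rule add_diff_hom) (rule D'_add)

lemma DD: assumes a: "a \<noteq> 0" and b: "b \<noteq> 0" and ab: "a + b \<noteq> 0"
  shows "D' a (D' b v) = D' b (D' a v) + sc (of_int (a - b)) (D' (a + b) v)"
proof -
  have e1: "D' a (D' b v) = d a (d b v) - L a (d b v) - L b (d a v) + L b (L a v)"
    by (simp only: D'_def2[of b v] D'_diff D'_L[of a b v]) (simp add: D'_def2 L_diff algebra_simps)
  have e2: "D' b (D' a v) = d b (d a v) - L b (d a v) - L a (d b v) + L a (L b v)"
    by (simp only: D'_def2[of a v] D'_diff D'_L[of b a v]) (simp add: D'_def2 L_diff algebra_simps)
  have v: "d a (d b v) = d b (d a v) + sc (of_int (a - b)) (d (a + b) v)"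
    using vir[of a b v] ab by simp
  show ?thesis unfolding e1 e2 v LL[OF a b ab, of v] D'_def2[of "a + b"]
    by (simp add: algebra_simps vs.scale_right_diff_distrib)
qed


lemma T_in: "vs.subspace W \<Longrightarrow> invariant_under h W \<Longrightarrow> w \<in> W \<Longrightarrow> T n w j \<in> W"
  by (simp add: T_def invariant_under_def)

lemma L_in: assumes W: "vs.subspace W" "invariant_under h W" and w: "w \<in> W"
  shows "L n w \<in> W"
proof -
  have "Sum_any (T n w) = sum (T n w) {j. T n w j \<noteq> 0}"
    by (rule Sum_any.expand_superset[OF fsupp_T]) simp
  moreover have "sum (T n w) {j. T n w j \<noteq> 0} \<in> W"
    by (rule vs.subspace_sum[OF W(1)]) (rule T_in[OF W w])
  ultimately have "Sum_any (T n w) \<in> W" by simp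
  then show ?thesis unfolding L_T
    by (auto intro!: vs.subspace_add[OF W(1)] vs.subspace_scale[OF W(1)] w vs.subspace_0[OF W(1)])
qed

lemma main:
  assumes simple: "simple_D_module sc d h"
    and U0: "0 \<in> U0"
    and Y: "Y_sub sc d h l U0 (-2) \<noteq> {0}"
  shows "c = 1
    \<and> h_generated sc h {v \<in> U0. \<forall>p. D' p v = 0} = UNIV
    \<and> (\<forall>n v. d n v = L n v)
    \<and> simple_h_submodule sc h (h_generated sc h {v \<in> U0. \<forall>p. D' p v = 0})"
proof -
  have Ysub: "0 \<in> Y_sub sc d h l U0 (-2)" using U0 by (simp add: Y_sub_def)
  obtain v0 where v0: "v0 \<in> Y_sub sc d h l U0 (-2)" "v0 \<noteq> 0" using Y Ysub by blast
  then have v0U: "v0 \<in> U0" and v0ge: "\<And>p. p \<ge> -2 \<Longrightarrow> D' p v0 = 0" by (auto simp: Y_sub_def)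
  have neg: "D' (-2 - int n) v0 = 0" for n
  proof (induction n)
    case 0 then show ?case using v0ge[of "-2"] by simp
  next
    case (Suc n)
    have a: "(-1::int) \<noteq> 0" "-2 - int n \<noteq> 0" "-1 + (-2 - int n) \<noteq> 0" by simp_all
    have "D' (-1) (D' (-2 - int n) v0) = D' (-2 - int n) (D' (-1) v0) + sc (of_int (-1 - (-2 - int n))) (D' (-1 + (-2 - int n)) v0)"
      by (rule DD[OF a])
    then have "sc (of_int (-1 - (-2 - int n))) (D' (-1 + (-2 - int n)) v0) = 0"
      using Suc.IH v0ge[of "-1"] by simp
    moreover have "(of_int (-1 - (-2 - int n)) :: complex) \<noteq> 0"
    proof -
      have "(of_int (-1 - (-2 - int n)) :: complex) = of_nat (Suc n)" by simp
      then show ?thesis using of_nat_neq_0[of n, where 'a=complex] by simp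
    qed
    moreover have "-1 + (-2 - int n) = -2 - int (Suc n)" by simp
    ultimately show ?case by simp
  qed
  have v0all: "D' p v0 = 0" for p
  proof (cases "p \<ge> -2")
    case True then show ?thesis by (rule v0ge)
  next
    case False
    then have "p = -2 - int (nat (-2 - p))" by simp
    then show ?thesis using neg[of "nat (-2 - p)"] by simp
  qed
  define Ann where "Ann = {v. \<forall>p. D' p v = 0}"
  have Ann_sub: "vs.subspace Ann"
    unfolding Ann_def by (rule vs.subspaceI) (simp_all add: D'_add D'_sc)
  have Ann_h: "invariant_under h Ann"
    unfolding Ann_def invariant_under_def by (simp add: D'_h)
  have Ann_d: "invariant_under d Ann"
    unfolding Ann_def invariant_under_def
  proof (intro allI ballI CollectI)
    fix m p v assume "v \<in> {v. \<forall>p. D' p v = 0}"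
    then have z: "\<And>p. D' p v = 0" by simp
    have "d m v = D' m v + L m v" by (simp add: D'_def2)
    then have "d m v = L m v" using z by simp
    then show "D' p (d m v) = 0" by (simp add: D'_L z)
  qed
  have sim: "\<And>W. vs.subspace W \<Longrightarrow> invariant_under d W \<Longrightarrow> invariant_under h W \<Longrightarrow> W = {0} \<or> W = UNIV"
    using simple unfolding simple_D_module_def by blast
  have "v0 \<in> Ann" using v0all unfolding Ann_def by simp
  then have "Ann \<noteq> {0}" using v0(2) by auto
  then have "Ann = UNIV" using sim[OF Ann_sub Ann_d Ann_h] by simp
  then have AU: "D' n v = 0" for n v unfolding Ann_def by blast
  have dL: "d n v = L n v" for n v
  proof -
    have "d n v - L n v = 0" using D'_def2[of n v] AU[of n v] by simp
    then show ?thesis by simp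
  qed
  have G: "invariant_under d W" if "vs.subspace W" "invariant_under h W" for W
    unfolding invariant_under_def dL
  proof (intro allI ballI)
    fix i w assume "w \<in> W" then show "L i w \<in> W" by (rule L_in[OF that])
  qed
  have "(UNIV::'v set) \<noteq> {0}" using simple unfolding simple_D_module_def by simp
  then obtain u where u: "u \<noteq> (0::'v)" by auto
  have c1: "c = 1"
  proof -
    have "d 2 (d (-2) u) = d (-2) (d 2 u) + (sc 4 (d 0 u) + sc (((2::complex) ^ 3 - 2) / 12 * c) u)"
      using vir[of 2 "-2" u] by simp
    then have "sc (((2::complex) ^ 3 - 2) / 12 * c) u = sc (1/2) u"
      unfolding dL LE by (simp add: ac_simps)
    then have "sc (((2::complex) ^ 3 - 2) / 12 * c - 1/2) u = 0"
      by (simp add: vs.scale_left_diff_distrib)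
    then have "((2::complex) ^ 3 - 2) / 12 * c - 1/2 = 0" using u by simp
    then show ?thesis by (simp add: field_simps)
  qed
  define K0 where "K0 = {v \<in> U0. \<forall>p. D' p v = 0}"
  define K where "K = h_generated sc h K0"
  have K_sub: "vs.subspace K" unfolding K_def h_generated_def
    by (rule vs.subspace_Inter) blast
  have K_h: "invariant_under h K" unfolding K_def h_generated_def invariant_under_def
    by blast
  have K0K: "K0 \<subseteq> K" unfolding K_def h_generated_def by blast
  have v0K: "v0 \<in> K" using K0K v0U v0all unfolding K0_def by blast
  have Knz: "K \<noteq> {0}" using v0K v0(2) by blast
  have KU: "K = UNIV" using sim[OF K_sub G[OF K_sub K_h] K_h] Knz by simp
  have "simple_h_submodule sc h K"
    unfolding simple_h_submodule_def
  proof (intro conjI allI impI K_sub K_h Knz)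
    fix W assume W: "vs.subspace W \<and> W \<subseteq> K \<and> invariant_under h W"
    then have "W = {0} \<or> W = UNIV" using sim G by blast
    then show "W = {0} \<or> W = K" using KU by blast
  qed
  then show ?thesis using c1 KU dL unfolding K_def K0_def by simp
qed

end

theorem proposition4p4:
  fixes sc :: "complex \<Rightarrow> 'v::ab_group_add \<Rightarrow> 'v"
    and d h :: "int \<Rightarrow> 'v \<Rightarrow> 'v"
    and c l :: complex and nS mS :: int
  assumes mod: "mirror_HV_module sc d h c l"
    and restr: "restricted_module d h"
    and simple: "simple_D_module sc d h"
    and lnz: "l \<noteq> 0"
    and nS: "S_sub h nS \<noteq> {0}" "\<forall>r. S_sub h r \<noteq> {0} \<longrightarrow> nS \<le> r"
    and mS: "U_sub d h nS mS \<noteq> {0}" "\<forall>r. U_sub d h nS r \<noteq> {0} \<longrightarrow> mS \<le> r"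
    and mn: "mS = 2 * nS" and mpos: "mS > 0"
    and rinf: "\<forall>n. Y_sub sc d h l (U_sub d h nS mS) n \<noteq> {0}"
  shows "c = 1
    \<and> h_generated sc h {v \<in> U_sub d h nS mS. \<forall>p. d_prime sc d h l p v = 0} = UNIV
    \<and> (\<forall>n v. d n v = L_op sc h l n v)
    \<and> simple_h_submodule sc h
        (h_generated sc h {v \<in> U_sub d h nS mS. \<forall>p. d_prime sc d h l p v = 0})"
proof -
  interpret M: MHV sc d h c l using mod restr lnz by (unfold_locales)
  have "0 \<in> U_sub d h nS mS" by (simp add: U_sub_def S_sub_def)
  then show ?thesis by (rule M.main[OF simple _ rinf[rule_format, of "-2"]])
qed

end
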